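(* Let $\mathcal{P}\subseteq[0,1]^n$ be a polytope and let $P:[0,1]^n\to\mathbb{R}$ be a Bernstein polynomial of degree at most $d$ such that $P(x)\le\varepsilon$ for all $x\in\mathcal{P}$. Then for each $u\in\mathcal{H}_0(\mathcal{P})$ with $\|u\|=1$ and all $x\in\mathcal{P}$, $$|\partial_uP(x)|\le\frac{2d^2\varepsilon}{\omega_{\mathcal{H}_0(\mathcal{P})}(\mathcal{P})},$$ where $\omega_{\mathcal{H}_0(\mathcal{P})}(\mathcal{P})=\min_{\|u\|=1,\,u\in\mathcal{H}_0(\mathcal{P})}\left(\max_{p\in\mathcal{P}}\langle u,p\rangle-\min_{p\in\mathcal{P}}\langle u,p\rangle\right)$.
   Context: A Bernstein monomial is $\prod_{i=1}^n x_i^{a_i}(1-x_i)^{b_i}$ with nonnegative integers $a_i,b_i$; a Bernstein polynomial is a finite combination of Bernstein monomials with positive coefficients; its degree is its degree as a polynomial. $\mathcal{H}(\mathcal{P})$ is the affine span of $\mathcal{P}$ and $\mathcal{H}_0(\mathcal{P})=\{y-y':y,y'\in\mathcal{H}(\mathcal{P})\}$ its translate through the origin. $\partial_u$ denotes the directional derivative along $u$. *)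

theory Defs
  imports "HOL-Analysis.Analysis"
begin

definition bernstein_monomial :: "('n::finite \<Rightarrow> nat) \<Rightarrow> ('n \<Rightarrow> nat) \<Rightarrow> real^'n \<Rightarrow> real" where
  "bernstein_monomial a b x = (\<Prod>i\<in>UNIV. (x$i) ^ (a i) * (1 - x$i) ^ (b i))"

definition is_bernstein_poly :: "(real^'n::finite \<Rightarrow> real) \<Rightarrow> bool" where
  "is_bernstein_poly f \<longleftrightarrow>
     (\<exists>(S :: (('n \<Rightarrow> nat) \<times> ('n \<Rightarrow> nat)) set) c. finite S \<and> (\<forall>p\<in>S. c p > (0::real)) \<and>
        f = (\<lambda>x. \<Sum>p\<in>S. c p * bernstein_monomial (fst p) (snd p) x))"

definition poly_degree_le :: "(real^'n::finite \<Rightarrow> real) \<Rightarrow> nat \<Rightarrow> bool" where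
  "poly_degree_le f d \<longleftrightarrow>
     (\<exists>c :: ('n \<Rightarrow> nat) \<Rightarrow> real.
        f = (\<lambda>x. \<Sum>k\<in>{k :: 'n \<Rightarrow> nat. sum k UNIV \<le> d}. c k * (\<Prod>i\<in>UNIV. (x$i) ^ (k i))))"

definition H0 :: "(real^'n::finite) set \<Rightarrow> (real^'n) set" where
  "H0 Q = {y - y' | y y'. y \<in> affine hull Q \<and> y' \<in> affine hull Q}"

definition width_H0 :: "(real^'n::finite) set \<Rightarrow> real" where
  "width_H0 Q = Inf {Sup ((\<lambda>p. inner u p) ` Q) - Inf ((\<lambda>p. inner u p) ` Q) | u. u \<in> H0 Q \<and> norm u = 1}"

end

theory Submission
  imports Defs "HOL-Computational_Algebra.Polynomial"
begin


fun cheb :: "nat \<Rightarrow> real poly" where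
  "cheb 0 = 1"
| "cheb (Suc 0) = [:0, 1:]"
| "cheb (Suc (Suc n)) = [:0, 2:] * cheb (Suc n) - cheb n"

lemma cheb_cos: "poly (cheb n) (cos t) = cos (real n * t)"
proof (induction n rule: cheb.induct)
  case (3 n)
  have "cos (real (Suc (Suc n)) * t) = 2 * cos t * cos (real (Suc n) * t) - cos (real n * t)"
  proof -
    have a: "real (Suc (Suc n)) * t = real (Suc n) * t + t" "real n * t = real (Suc n) * t - t"
      by (simp_all add: algebra_simps)
    show ?thesis unfolding a cos_add cos_diff by simp
  qed
  then show ?case using 3 by simp
qed auto

lemma cheb_degree: "degree (cheb n) \<le> n"
proof (induction n rule: cheb.induct)
  case (3 n)
  have "degree ([:0, 2:] * cheb (Suc n)) \<le> Suc (Suc n)"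
    using degree_mult_le[of "[:0, 2:]" "cheb (Suc n)"] 3 by simp
  moreover have "degree (cheb n) \<le> Suc (Suc n)" using 3 by simp
  ultimately show ?case by (simp add: degree_diff_le)
qed auto

lemma cheb_one: "poly (cheb n) 1 = 1"
  using cheb_cos[of n 0] by simp

lemma cheb_deriv_one: "poly (pderiv (cheb n)) 1 = real n ^ 2"
proof (induction n rule: cheb.induct)
  case (3 n)
  then show ?case by (simp add: pderiv_diff pderiv_pCons pderiv_smult cheb_one power2_eq_square algebra_simps)
qed (auto simp: pderiv_pCons)

locale chebnodes =
  fixes n :: nat
  assumes n_pos: "n \<ge> 1"
begin

definition eta :: "nat \<Rightarrow> real" where "eta j = cos (real j * pi / real n)"
definition L :: "nat \<Rightarrow> real poly" where "L j = (\<Prod>i\<in>{0..n}-{j}. [:- eta i, 1:])"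
definition Dn :: "nat \<Rightarrow> real" where "Dn j = (\<Prod>i\<in>{0..n}-{j}. (eta j - eta i))"
definition w :: "nat \<Rightarrow> real" where "w j = poly (pderiv (L j)) 1 / Dn j"

lemma arg_range: "j \<le> n \<Longrightarrow> 0 \<le> real j * pi / real n \<and> real j * pi / real n \<le> pi"
  using n_pos by (auto simp: field_simps)

lemma eta_less: "i < j \<Longrightarrow> j \<le> n \<Longrightarrow> eta j < eta i"
  unfolding eta_def
  using arg_range[of i] arg_range[of j] n_pos
  by (subst cos_mono_less_eq) (auto simp: divide_strict_right_mono)

lemma eta_inj: "i \<le> n \<Longrightarrow> j \<le> n \<Longrightarrow> eta i = eta j \<Longrightarrow> i = j"
  using eta_less[of i j] eta_less[of j i] by (cases i j rule: linorder_cases) auto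

lemma eta_le1: "eta j \<le> 1" unfolding eta_def by simp

lemma Dn_nz: assumes "j \<le> n" shows "Dn j \<noteq> 0"
proof -
  have H: "\<forall>i\<in>{0..n}-{j}. eta j - eta i \<noteq> 0"
  proof
    fix i assume i: "i \<in> {0..n}-{j}"
    show "eta j - eta i \<noteq> 0"
    proof
      assume "eta j - eta i = 0"
      then have "eta j = eta i" by simp
      with eta_inj[OF assms, of i] i show False by simp
    qed
  qed
  show ?thesis unfolding Dn_def
  proof (subst prod_zero_iff)
    show "finite ({0..n}-{j})" by simp
    show "\<not> (\<exists>i\<in>{0..n}-{j}. eta j - eta i = 0)" using H by blast
  qed
qed

lemma poly_L: "j \<le> n \<Longrightarrow> k \<le> n \<Longrightarrow> poly (L j) (eta k) = (if k = j then Dn j else 0)"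
  unfolding L_def Dn_def poly_prod by (auto simp: prod_zero_iff)

lemma degree_L: "j \<le> n \<Longrightarrow> degree (L j) \<le> n"
proof -
  assume "j \<le> n"
  have "degree (L j) \<le> sum (degree \<circ> (\<lambda>i. [:- eta i, 1:])) ({0..n}-{j})"
    unfolding L_def by (rule degree_prod_sum_le) simp
  also have "\<dots> = card ({0..n}-{j})" by simp
  also have "\<dots> \<le> n" using \<open>j \<le> n\<close> by (auto simp: card_Diff_singleton)
  finally show ?thesis .
qed

lemma interp:
  assumes "degree r \<le> n"
  shows "r = (\<Sum>j\<in>{0..n}. smult (poly r (eta j) / Dn j) (L j))"
proof (rule ccontr)
  define s where "s = r - (\<Sum>j\<in>{0..n}. smult (poly r (eta j) / Dn j) (L j))"
  assume "r \<noteq> (\<Sum>j\<in>{0..n}. smult (poly r (eta j) / Dn j) (L j))"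
  then have s0: "s \<noteq> 0" unfolding s_def by simp
  have ds: "degree s \<le> n" unfolding s_def
    by (rule order.trans[OF degree_diff_le_max]) (auto intro!: degree_sum_le order.trans[OF degree_smult_le] degree_L assms)
  have roots: "poly s (eta k) = 0" if "k \<le> n" for k
  proof -
    have "(\<Sum>j\<in>{0..n}. poly r (eta j) / Dn j * poly (L j) (eta k)) =
          (\<Sum>j\<in>{0..n}. if j = k then poly r (eta k) else 0)"
      using that Dn_nz by (intro sum.cong) (auto simp: poly_L)
    also have "\<dots> = poly r (eta k)" using that by simp
    finally show ?thesis unfolding s_def by (simp add: poly_sum)
  qed
  have "eta ` {0..n} \<subseteq> {x. poly s x = 0}" using roots by auto
  then have "card (eta ` {0..n}) \<le> card {x. poly s x = 0}"
    using poly_roots_finite[OF s0] by (rule card_mono[rotated])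
  moreover have "card (eta ` {0..n}) = n + 1"
  proof -
    have "inj_on eta {0..n}" by (rule inj_onI) (auto intro: eta_inj)
    then show ?thesis by (simp add: card_image)
  qed
  ultimately show False using card_poly_roots_bound[OF s0] ds by simp
qed

lemma pderiv_sum': "pderiv (sum f A) = (\<Sum>x\<in>A. pderiv (f x))"
  using higher_pderiv_sum[of 1 f A] by simp

lemma deriv_formula:
  assumes "degree r \<le> n"
  shows "poly (pderiv r) 1 = (\<Sum>j\<in>{0..n}. poly r (eta j) * w j)"
proof -
  have "poly (pderiv r) 1 = poly (pderiv (\<Sum>j\<in>{0..n}. smult (poly r (eta j) / Dn j) (L j))) 1"
    using interp[OF assms] by simp
  also have "\<dots> = (\<Sum>j\<in>{0..n}. poly r (eta j) * w j)"
    by (simp add: pderiv_sum' pderiv_smult poly_sum w_def)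
  finally show ?thesis .
qed

lemma pL_nonneg: "poly (pderiv (L j)) 1 \<ge> 0"
  unfolding L_def pderiv_prod
  by (auto simp: poly_sum poly_prod pderiv_pCons eta_le1 intro!: sum_nonneg prod_nonneg)

lemma Dn_sign: assumes "j \<le> n" shows "(-1)^j * Dn j > 0"
proof -
  have split: "{0..n}-{j} = {0..<j} \<union> {Suc j..n}" using assms by auto
  have "Dn j = (\<Prod>i\<in>{0..<j}. (eta j - eta i)) * (\<Prod>i\<in>{Suc j..n}. (eta j - eta i))"
    unfolding Dn_def split by (subst prod.union_disjoint) auto
  also have "(\<Prod>i\<in>{0..<j}. (eta j - eta i)) = (-1)^j * (\<Prod>i\<in>{0..<j}. (eta i - eta j))"
    using prod_uminus[of "\<lambda>i. eta i - eta j" "{0..<j}"] by simp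
  finally have "(-1)^j * Dn j = (\<Prod>i\<in>{0..<j}. (eta i - eta j)) * (\<Prod>i\<in>{Suc j..n}. (eta j - eta i))"
    by (simp add: mult.assoc[symmetric] power_mult_distrib[symmetric])
  also have "\<dots> > 0"
  proof (intro mult_pos_pos prod_pos)
    fix i assume "i \<in> {0..<j}"
    then show "0 < eta i - eta j" using eta_less[of i j] assms by simp
  next
    fix i assume "i \<in> {Suc j..n}"
    then show "0 < eta j - eta i" using eta_less[of j i] by simp
  qed
  finally show ?thesis .
qed

lemma w_sign: assumes "j \<le> n" shows "(-1)^j * w j \<ge> 0"
proof -
  have "(-1)^j * w j = poly (pderiv (L j)) 1 / ((-1)^j * Dn j)"
    unfolding w_def by (cases "even j") auto
  then show ?thesis using pL_nonneg Dn_sign[OF assms] by simp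
qed

lemma markov:
  assumes "degree r \<le> n" and M: "\<forall>s\<in>{-1..1}. \<bar>poly r s\<bar> \<le> M"
  shows "\<bar>poly (pderiv r) 1\<bar> \<le> real n ^ 2 * M"
proof -
  have eta_in: "eta j \<in> {-1..1}" for j unfolding eta_def by auto
  have "\<bar>poly (pderiv r) 1\<bar> \<le> (\<Sum>j\<in>{0..n}. \<bar>poly r (eta j) * w j\<bar>)"
    unfolding deriv_formula[OF assms(1)] by (rule sum_abs)
  also have "\<dots> \<le> (\<Sum>j\<in>{0..n}. M * ((-1)^j * w j))"
  proof (rule sum_mono)
    fix j assume j: "j \<in> {0..n}"
    have "\<bar>w j\<bar> = (-1)^j * w j" using w_sign[of j] j
      by (cases "even j") auto
    have rM: "\<bar>poly r (eta j)\<bar> \<le> M" using M eta_in[of j] by blast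
    have "\<bar>poly r (eta j) * w j\<bar> = \<bar>poly r (eta j)\<bar> * \<bar>w j\<bar>" by (rule abs_mult)
    also have "\<dots> \<le> M * \<bar>w j\<bar>" by (rule mult_right_mono[OF rM abs_ge_zero])
    finally show "\<bar>poly r (eta j) * w j\<bar> \<le> M * ((-1)^j * w j)"
      using \<open>\<bar>w j\<bar> = (-1)^j * w j\<close> by simp
  qed
  also have "\<dots> = M * (\<Sum>j\<in>{0..n}. poly (cheb n) (eta j) * w j)"
  proof -
    have ch: "poly (cheb n) (eta j) = (-1)^j" for j
    proof -
      have "real n * (real j * pi / real n) = real j * pi" using n_pos by simp
      then show ?thesis unfolding eta_def cheb_cos by (simp add: cos_npi)
    qed
    show ?thesis unfolding sum_distrib_left by (intro sum.cong refl) (simp add: ch)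
  qed
  also have "\<dots> = M * real n ^ 2"
    using deriv_formula[OF cheb_degree] cheb_deriv_one by simp
  finally show ?thesis by (simp add: mult.commute)
qed

end



lemma markov01:
  fixes p :: "real poly"
  assumes deg: "degree p \<le> n" and M: "\<forall>t\<in>{0..1}. \<bar>poly p t - c\<bar> \<le> M"
  shows "\<bar>poly (pderiv p) 0\<bar> \<le> 2 * real n ^ 2 * M"
proof (cases "n = 0")
  case True
  then have "degree p = 0" using deg by simp
  then obtain a where "p = [:a:]" by (metis degree_eq_zeroE)
  then show ?thesis using True by (simp add: pderiv_pCons)
next
  case False
  then interpret chebnodes n by unfold_locales simp
  define q :: "real poly" where "q = [:1/2, -1/2:]"
  define r where "r = pcompose (p - [:c:]) q"
  have dq: "degree q = 1" unfolding q_def by simp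
  have "degree (p - [:c:]) \<le> n"
    using deg degree_diff_le[of p n "[:c:]"] by simp
  then have dr: "degree r \<le> n" unfolding r_def degree_pcompose dq by simp
  have pr: "poly r s = poly p (1/2 - s/2) - c" for s
    unfolding r_def q_def by (simp add: poly_pcompose)
  have Mr: "\<forall>s\<in>{-1..1}. \<bar>poly r s\<bar> \<le> M"
  proof
    fix s :: real assume "s \<in> {-1..1}"
    then have "1/2 - s/2 \<in> {0..1}" by auto
    then show "\<bar>poly r s\<bar> \<le> M" using M pr by auto
  qed
  have "poly (pderiv r) 1 = - poly (pderiv p) 0 / 2"
    unfolding r_def pderiv_pcompose q_def
    by (simp add: poly_pcompose pderiv_diff pderiv_pCons)
  with markov[OF dr Mr] show ?thesis by simp
qed

lemma bern_nonneg:
  assumes "is_bernstein_poly P" "\<forall>i. 0 \<le> x$i \<and> x$i \<le> 1"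
  shows "P x \<ge> 0"
proof -
  obtain S c where S: "finite S" "\<forall>p\<in>S. c p > (0::real)"
    "P = (\<lambda>x. \<Sum>p\<in>S. c p * bernstein_monomial (fst p) (snd p) x)"
    using assms(1) unfolding is_bernstein_poly_def by blast
  have "bernstein_monomial a b x \<ge> 0" for a b
    unfolding bernstein_monomial_def using assms(2) by (auto intro!: prod_nonneg)
  then have "\<forall>p\<in>S. 0 \<le> c p * bernstein_monomial (fst p) (snd p) x"
    using S(2) by (metis less_eq_real_def mult_nonneg_nonneg)
  then show ?thesis unfolding S(3) by (simp add: sum_nonneg)
qed

lemma line_poly:
  fixes P :: "real^'n \<Rightarrow> real"
  assumes "poly_degree_le P d"
  shows "\<exists>p. degree p \<le> d \<and> (\<forall>t. P (x + t *\<^sub>R v) = poly p t)"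
proof -
  obtain c :: "('n \<Rightarrow> nat) \<Rightarrow> real" where
    P: "P = (\<lambda>x. \<Sum>k\<in>{k :: 'n \<Rightarrow> nat. sum k UNIV \<le> d}. c k * (\<Prod>i\<in>UNIV. (x$i) ^ (k i)))"
    using assms unfolding poly_degree_le_def by blast
  define Ks where "Ks = {k :: 'n \<Rightarrow> nat. sum k UNIV \<le> d}"
  define p where "p = (\<Sum>k\<in>Ks. smult (c k) (\<Prod>i\<in>UNIV. [:x$i, v$i:] ^ (k i)))"
  have "P (x + t *\<^sub>R v) = poly p t" for t
    unfolding P p_def Ks_def by (simp add: poly_sum poly_prod algebra_simps)
  moreover have "degree p \<le> d"
  proof (cases "finite Ks")
    case True
    show ?thesis unfolding p_def
    proof (rule degree_sum_le[OF True])
      fix k assume k: "k \<in> Ks"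
      have "degree (\<Prod>i\<in>UNIV. [:x$i, v$i:] ^ (k i)) \<le> sum (degree \<circ> (\<lambda>i. [:x$i, v$i:] ^ (k i))) UNIV"
        by (rule degree_prod_sum_le) simp
      also have "\<dots> \<le> sum k UNIV"
      proof (rule sum_mono)
        fix i
        have "degree ([:x$i, v$i:] ^ (k i)) \<le> degree [:x$i, v$i:] * k i" by (rule degree_power_le)
        also have "\<dots> \<le> k i" by simp
        finally show "(degree \<circ> (\<lambda>i. [:x$i, v$i:] ^ (k i))) i \<le> k i" by simp
      qed
      also have "\<dots> \<le> d" using k unfolding Ks_def by simp
      finally show "degree (smult (c k) (\<Prod>i\<in>UNIV. [:x$i, v$i:] ^ (k i))) \<le> d"
        using degree_smult_le order.trans by blast
    qed
  next
    case False
    then show ?thesis unfolding p_def by simp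
  qed
  ultimately show ?thesis by blast
qed

lemma differentiable_prod':
  fixes f :: "'i \<Rightarrow> 'a::real_normed_vector \<Rightarrow> real"
  assumes "finite A" "\<And>i. i \<in> A \<Longrightarrow> f i differentiable (at x)"
  shows "(\<lambda>x. \<Prod>i\<in>A. f i x) differentiable (at x)"
  using assms by (induction A rule: finite_induct) (auto intro!: differentiable_mult)

lemma P_diff:
  fixes P :: "real^'n \<Rightarrow> real"
  assumes "poly_degree_le P d"
  shows "P differentiable (at x)"
proof -
  obtain c :: "('n \<Rightarrow> nat) \<Rightarrow> real" where
    P: "P = (\<lambda>x. \<Sum>k\<in>{k :: 'n \<Rightarrow> nat. sum k UNIV \<le> d}. c k * (\<Prod>i\<in>UNIV. (x$i) ^ (k i)))"
    using assms unfolding poly_degree_le_def by blast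
  have nth: "(\<lambda>x::real^'n. x$i) differentiable (at x)" for i
    by (rule bounded_linear_imp_differentiable) (rule bounded_linear_vec_nth)
  show ?thesis
  proof (cases "finite {k :: 'n \<Rightarrow> nat. sum k UNIV \<le> d}")
    case True
    show ?thesis unfolding P
      by (intro differentiable_sum True ballI differentiable_mult differentiable_const differentiable_prod'
        differentiable_power nth) auto
  next
    case False
    then show ?thesis unfolding P by simp
  qed
qed

lemma deriv_line:
  fixes P :: "real^'n \<Rightarrow> real"
  assumes D: "(P has_derivative D) (at y)"
  shows "((\<lambda>t. P (y + t *\<^sub>R v)) has_real_derivative D v) (at 0)"
proof -
  have l: "linear D" using has_derivative_linear[OF D] .
  have f: "((\<lambda>t::real. y + t *\<^sub>R v) has_derivative (\<lambda>t. t *\<^sub>R v)) (at 0)"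
    by (auto intro!: derivative_eq_intros)
  have D': "(P has_derivative D) (at ((\<lambda>t::real. y + t *\<^sub>R v) 0))" using D by simp
  have "((P \<circ> (\<lambda>t. y + t *\<^sub>R v)) has_derivative (D \<circ> (\<lambda>t. t *\<^sub>R v))) (at 0)"
    by (rule diff_chain_at[OF f D'])
  moreover have "D \<circ> (\<lambda>t. t *\<^sub>R v) = (*) (D v)"
    using linear_scale[OF l] by (auto simp: fun_eq_iff)
  ultimately show ?thesis unfolding has_field_derivative_def by (simp add: o_def)
qed



definition W :: "(real^'n) set \<Rightarrow> real^'n \<Rightarrow> real" where
  "W K e = Sup ((\<lambda>p. inner e p) ` K) - Inf ((\<lambda>p. inner e p) ` K)"

lemma img_bounded:
  fixes K :: "(real^'n) set"
  assumes "compact K"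
  shows "bdd_above ((\<lambda>p. inner e p) ` K)" "bdd_below ((\<lambda>p. inner e p) ` K)"
proof -
  have "compact ((\<lambda>p. inner e p) ` K)"
    by (rule compact_continuous_image[OF _ assms]) (intro continuous_intros)
  then have "bounded ((\<lambda>p. inner e p) ` K)" by (rule compact_imp_bounded)
  then show "bdd_above ((\<lambda>p. inner e p) ` K)" "bdd_below ((\<lambda>p. inner e p) ` K)"
    by (auto intro: bounded_imp_bdd_above bounded_imp_bdd_below)
qed

lemma W_ge:
  assumes "compact K" "a \<in> K" "b \<in> K"
  shows "inner e (a - b) \<le> W K e"
proof -
  have "inner e a \<le> Sup ((\<lambda>p. inner e p) ` K)"
    using assms img_bounded[OF assms(1)] by (intro cSup_upper) auto
  moreover have "Inf ((\<lambda>p. inner e p) ` K) \<le> inner e b"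
    using assms img_bounded[OF assms(1)] by (intro cInf_lower) auto
  ultimately show ?thesis unfolding W_def by (simp add: inner_diff_right)
qed

lemma W_le:
  assumes "K \<noteq> {}" "\<And>a b. a \<in> K \<Longrightarrow> b \<in> K \<Longrightarrow> inner e (a - b) \<le> c"
  shows "W K e \<le> c"
proof -
  have "Sup ((\<lambda>p. inner e p) ` K) - c \<le> inner e b" if b: "b \<in> K" for b
  proof -
    have "Sup ((\<lambda>p. inner e p) ` K) \<le> c + inner e b"
    proof (rule cSup_least)
      show "(\<lambda>p. inner e p) ` K \<noteq> {}" using assms(1) by simp
    next
      fix z assume "z \<in> (\<lambda>p. inner e p) ` K"
      then obtain p where p: "p \<in> K" "z = inner e p" by blast
      from assms(2)[OF p(1) b] p(2) show "z \<le> c + inner e b" by (simp add: inner_diff_right)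
    qed
    then show ?thesis by simp
  qed
  then have "Sup ((\<lambda>p. inner e p) ` K) - c \<le> Inf ((\<lambda>p. inner e p) ` K)"
    using assms(1) by (intro cInf_greatest) auto
  then show ?thesis unfolding W_def by simp
qed

lemma W_nonneg: "compact K \<Longrightarrow> K \<noteq> {} \<Longrightarrow> 0 \<le> W K e"
  using W_ge[of K _ _ e] by fastforce

lemma W_lip:
  fixes K :: "(real^'n) set"
  assumes "compact K" "K \<noteq> {}" "\<And>a b. a \<in> K \<Longrightarrow> b \<in> K \<Longrightarrow> norm (a - b) \<le> R"
  shows "W K e \<le> W K e' + norm (e - e') * R"
proof (rule W_le[OF assms(2)])
  fix a b assume ab: "a \<in> K" "b \<in> K"
  have "inner e (a - b) = inner e' (a - b) + inner (e - e') (a - b)" by (simp add: inner_diff_left)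
  also have "inner (e - e') (a - b) \<le> norm (e - e') * norm (a - b)"
    by (rule norm_cauchy_schwarz)
  also have "\<dots> \<le> norm (e - e') * R" using assms(3)[OF ab] by (simp add: mult_left_mono)
  finally show "inner e (a - b) \<le> W K e' + norm (e - e') * R"
    using W_ge[OF assms(1) ab, of e'] by simp
qed

lemma W_cont:
  fixes K :: "(real^'n) set"
  assumes "compact K" "K \<noteq> {}"
  shows "continuous_on UNIV (W K)"
proof -
  obtain R where R: "\<And>a b. a \<in> K \<Longrightarrow> b \<in> K \<Longrightarrow> norm (a - b) \<le> R" "R \<ge> 0"
  proof -
    obtain B where B: "\<forall>x\<in>K. norm x \<le> B" using compact_imp_bounded[OF assms(1)] bounded_iff by blast
    show ?thesis
    proof
      fix a b assume "a \<in> K" "b \<in> K"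
      then have "norm a \<le> B" "norm b \<le> B" using B by auto
      then show "norm (a - b) \<le> 2 * B" using norm_triangle_ineq4[of a b] by linarith
    next
      obtain k where "k \<in> K" using assms(2) by blast
      then have "norm k \<le> B" using B by blast
      then show "0 \<le> 2 * B" using norm_ge_zero[of k] by linarith
    qed
  qed
  have "R-lipschitz_on UNIV (W K)"
    unfolding lipschitz_on_def
  proof (intro conjI ballI R(2))
    fix e e' :: "real^'n"
    have "W K e \<le> W K e' + norm (e - e') * R" "W K e' \<le> W K e + norm (e' - e) * R"
      using W_lip[OF assms R(1)] by blast+
    then show "dist (W K e) (W K e') \<le> R * dist e e'"
      by (simp add: dist_real_def dist_norm norm_minus_commute abs_le_iff mult.commute)
  qed
  then show ?thesis by (rule lipschitz_on_continuous_on)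
qed

lemma H0_subspace:
  fixes K :: "(real^'n) set"
  assumes "K \<noteq> {}"
  shows "subspace (H0 K)"
proof -
  let ?A = "affine hull K"
  have aff: "affine ?A" by simp
  obtain k where k: "k \<in> ?A" using assms hull_subset by fastforce
  show ?thesis unfolding subspace_def H0_def
  proof (intro conjI allI ballI)
    show "0 \<in> {y - y' |y y'. y \<in> ?A \<and> y' \<in> ?A}" using k by force
  next
    fix x y assume "x \<in> {y - y' |y y'. y \<in> ?A \<and> y' \<in> ?A}" "y \<in> {y - y' |y y'. y \<in> ?A \<and> y' \<in> ?A}"
    then obtain a1 b1 a2 b2 where "x = a1 - b1" "y = a2 - b2" "a1 \<in> ?A" "b1 \<in> ?A" "a2 \<in> ?A" "b2 \<in> ?A"
      by blast
    moreover have "a1 + 1 *\<^sub>R (a2 - b2) \<in> ?A"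
      by (rule mem_affine_3_minus[OF aff]) (use calculation in auto)
    ultimately show "x + y \<in> {y - y' |y y'. y \<in> ?A \<and> y' \<in> ?A}"
      by (intro CollectI exI[of _ "a1 + 1 *\<^sub>R (a2 - b2)"] exI[of _ b1]) (auto simp: algebra_simps)
  next
    fix c :: real and x assume "x \<in> {y - y' |y y'. y \<in> ?A \<and> y' \<in> ?A}"
    then obtain a b where ab: "x = a - b" "a \<in> ?A" "b \<in> ?A" by blast
    have "b + c *\<^sub>R (a - b) \<in> ?A" by (rule mem_affine_3_minus[OF aff]) (use ab in auto)
    then show "c *\<^sub>R x \<in> {y - y' |y y'. y \<in> ?A \<and> y' \<in> ?A}"
      using ab by (intro CollectI exI[of _ "b + c *\<^sub>R (a - b)"] exI[of _ b]) auto
  qed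
qed

lemma W_pos:
  fixes K :: "(real^'n) set"
  assumes "compact K" "K \<noteq> {}" "e \<in> H0 K" "e \<noteq> 0"
  shows "W K e > 0"
proof (rule ccontr)
  assume "\<not> W K e > 0"
  then have W0: "W K e \<le> 0" by simp
  obtain b0 where b0: "b0 \<in> K" using assms(2) by blast
  have eq: "inner e a = inner e b0" if "a \<in> K" for a
    using W_ge[OF assms(1) that b0, of e] W_ge[OF assms(1) b0 that, of e] W0
    by (simp add: inner_diff_right)
  have "affine hull K \<subseteq> {p. inner e p = inner e b0}"
    by (rule hull_minimal) (use eq affine_hyperplane in auto)
  moreover obtain y y' where "e = y - y'" "y \<in> affine hull K" "y' \<in> affine hull K"
    using assms(3) unfolding H0_def by blast
  ultimately have "inner e y = inner e b0" "inner e y' = inner e b0" by auto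
  then have "inner e e = 0" using \<open>e = y - y'\<close> by (simp add: inner_diff_right)
  then show False using assms(4) by simp
qed

lemma width_facts:
  fixes K :: "(real^'n) set"
  assumes "compact K" "K \<noteq> {}" "u \<in> H0 K" "norm u = 1"
  shows "width_H0 K > 0" "\<And>e. e \<in> H0 K \<Longrightarrow> norm e = 1 \<Longrightarrow> width_H0 K \<le> W K e"
proof -
  let ?U = "H0 K \<inter> sphere 0 1"
  have eqset: "{Sup ((\<lambda>p. inner u p) ` K) - Inf ((\<lambda>p. inner u p) ` K) | u. u \<in> H0 K \<and> norm u = 1}
      = W K ` ?U" unfolding W_def by auto
  have wdef: "width_H0 K = Inf (W K ` ?U)" unfolding width_H0_def eqset ..
  have cU: "compact ?U"
    using closed_subspace[OF H0_subspace[OF assms(2)]] by (intro closed_Int_compact) auto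
  have neU: "?U \<noteq> {}" using assms by auto
  obtain e0 where e0: "e0 \<in> ?U" "\<And>e. e \<in> ?U \<Longrightarrow> W K e0 \<le> W K e"
    using continuous_attains_inf[OF cU neU continuous_on_subset[OF W_cont[OF assms(1,2)]]] by blast
  have "W K e0 \<le> width_H0 K" unfolding wdef using neU e0 by (intro cInf_greatest) auto
  moreover have "W K e0 > 0" using e0(1) by (intro W_pos[OF assms(1,2)]) auto
  ultimately show "width_H0 K > 0" by simp
  fix e assume "e \<in> H0 K" "norm e = 1"
  then show "width_H0 K \<le> W K e" unfolding wdef
    using W_nonneg[OF assms(1,2)] by (intro cInf_lower) (auto intro!: bdd_belowI[of _ 0])
qed



lemma chord:
  fixes K :: "(real^'n) set"
  assumes cK: "compact K" and cvK: "convex K" and ne: "K \<noteq> {}" and u: "u \<in> H0 K" "norm u = 1"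
  shows "\<exists>a\<in>K. \<exists>b\<in>K. \<exists>l. a - b = l *\<^sub>R u \<and> width_H0 K \<le> l"
proof -
  define Ds where "Ds = {a - b | a b. a \<in> K \<and> b \<in> K}"
  have cDs: "compact Ds" unfolding Ds_def by (rule compact_differences[OF cK cK])
  have "Ds = (\<Union>x\<in>K. \<Union>y\<in>K. {x - y})" unfolding Ds_def by auto
  then have cvDs: "convex Ds" using convex_differences[OF cvK cvK] by simp
  have sub: "subspace (H0 K)" by (rule H0_subspace[OF ne])
  have DsH: "Ds \<subseteq> H0 K"
  proof
    fix y assume "y \<in> Ds"
    then obtain a b where "y = a - b" "a \<in> K" "b \<in> K" unfolding Ds_def by blast
    then have "y = a - b" "a \<in> affine hull K" "b \<in> affine hull K" using hull_inc by auto
    then show "y \<in> H0 K" unfolding H0_def by blast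
  qed
  obtain k where k: "k \<in> K" using ne by blast
  have "0 = k - k" by simp
  then have zD: "0 \<in> Ds" unfolding Ds_def using k by blast
  define T where "T = {t::real. t *\<^sub>R u \<in> Ds}"
  have T0: "0 \<in> T" unfolding T_def using zD by simp
  have "closed ((\<lambda>t::real. t *\<^sub>R u) -` Ds)"
    by (rule continuous_closed_vimage[OF compact_imp_closed[OF cDs]]) (intro continuous_intros)
  then have clT: "closed T" unfolding T_def by (simp add: vimage_def)
  obtain B where B: "\<forall>y\<in>Ds. norm y \<le> B" using compact_imp_bounded[OF cDs] bounded_iff by blast
  have bT: "bdd_above T"
  proof (rule bdd_aboveI)
    fix t assume "t \<in> T"
    then have "norm (t *\<^sub>R u) \<le> B" using B unfolding T_def by blast
    then show "t \<le> B" using u(2) by simp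
  qed
  define l where "l = Sup T"
  have lT: "l \<in> T" unfolding l_def using closed_contains_Sup[OF _ bT clT] T0 by blast
  have l0: "0 \<le> l" unfolding l_def using cSup_upper[OF T0 bT] .
  have "l *\<^sub>R u \<in> Ds" using lT unfolding T_def by simp
  then obtain a b where ab0: "l *\<^sub>R u = a - b" "a \<in> K" "b \<in> K"
    unfolding Ds_def by blast
  then have ab: "a \<in> K" "b \<in> K" "a - b = l *\<^sub>R u" by auto
  have "width_H0 K \<le> l"
  proof (rule ccontr)
    assume "\<not> width_H0 K \<le> l"
    define l' where "l' = (l + width_H0 K) / 2"
    have ll': "l < l'" "l' < width_H0 K" using \<open>\<not> width_H0 K \<le> l\<close> unfolding l'_def by auto
    define z where "z = l' *\<^sub>R u"
    have zn: "z \<notin> Ds"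
    proof
      assume "z \<in> Ds"
      then have "l' \<in> T" unfolding T_def z_def by simp
      then have "l' \<le> l" unfolding l_def using cSup_upper[OF _ bT] by blast
      then show False using ll' by simp
    qed
    obtain a0 \<beta> where sep: "inner a0 z < \<beta>" "\<forall>y\<in>Ds. inner a0 y > \<beta>"
      using separating_hyperplane_closed_point[OF cvDs compact_imp_closed[OF cDs] zn] by blast
    obtain v1 v2 where v: "v1 \<in> span (H0 K)" "\<And>w. w \<in> span (H0 K) \<Longrightarrow> orthogonal v2 w" "- a0 = v1 + v2"
      using orthogonal_subspace_decomp_exists[of "H0 K" "- a0"] by blast
    have v1H: "v1 \<in> H0 K" using v(1) span_minimal[OF order_refl sub] by blast
    have inn: "inner (- a0) y = inner v1 y" if "y \<in> H0 K" for y
    proof -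
      have "inner v2 y = 0" using v(2)[of y] that span_base[of y "H0 K"] unfolding orthogonal_def by blast
      then show ?thesis unfolding v(3) by (simp add: inner_add_left)
    qed
    define \<gamma> where "\<gamma> = - \<beta>"
    have lt: "inner v1 y < \<gamma>" if "y \<in> Ds" for y
    proof -
      have "y \<in> H0 K" using DsH that by blast
      then have "- (inner a0 y) = inner v1 y" using inn[of y] by simp
      moreover have "\<beta> < inner a0 y" using sep(2) that by blast
      ultimately show ?thesis unfolding \<gamma>_def by linarith
    qed
    have zH: "z \<in> H0 K" unfolding z_def using u(1) sub by (simp add: subspace_scale)
    have gt: "inner v1 z > \<gamma>" using sep(1) inn[OF zH] unfolding \<gamma>_def by simp
    have g0: "\<gamma> > 0" using lt[OF zD] by simp
    have l'0: "l' > 0" using l0 ll' by simp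
    have "inner v1 z = l' * inner v1 u" unfolding z_def by simp
    also have "\<dots> \<le> l' * norm v1"
      using norm_cauchy_schwarz[of v1 u] u(2) l'0 by (simp add: mult_left_mono)
    finally have gl: "\<gamma> < l' * norm v1" using gt by simp
    then have "0 < l' * norm v1" using g0 by linarith
    then have nv: "norm v1 > 0" using l'0 by (simp add: zero_less_mult_iff)
    define e where "e = (1 / norm v1) *\<^sub>R v1"
    have eH: "e \<in> H0 K" unfolding e_def using v1H sub by (simp add: subspace_scale)
    have en: "norm e = 1" unfolding e_def using nv by simp
    have "W K e \<le> \<gamma> / norm v1"
    proof (rule W_le[OF ne])
      fix a b assume "a \<in> K" "b \<in> K"
      then have "a - b \<in> Ds" unfolding Ds_def by blast
      then have "inner v1 (a - b) < \<gamma>" by (rule lt)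
      then show "inner e (a - b) \<le> \<gamma> / norm v1"
        unfolding e_def using nv by (simp add: divide_right_mono)
    qed
    also have "\<dots> < l'" using gl nv by (subst divide_less_eq) (simp add: mult.commute)
    finally have "W K e < l'" .
    moreover have "width_H0 K \<le> W K e" using width_facts(2)[OF cK ne u eH en] .
    ultimately show False using ll' by simp
  qed
  then show ?thesis using ab by blast
qed

theorem lemma7p9:
  fixes Q :: "(real^'n) set" and P :: "real^'n \<Rightarrow> real" and d :: nat and \<epsilon> :: real
  assumes "polytope Q"
    and "Q \<subseteq> {x. \<forall>i. 0 \<le> x$i \<and> x$i \<le> 1}"
    and "is_bernstein_poly P"
    and "poly_degree_le P d"
    and "\<forall>x\<in>Q. P x \<le> \<epsilon>"
  shows "\<forall>u\<in>H0 Q. norm u = 1 \<longrightarrow> (\<forall>x\<in>Q.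
           \<bar>deriv (\<lambda>t. P (x + t *\<^sub>R u)) 0\<bar> \<le> 2 * (real d)^2 * \<epsilon> / width_H0 Q)"
proof (intro ballI impI)
  fix u x assume u: "u \<in> H0 Q" "norm u = 1" and x: "x \<in> Q"
  have cQ: "compact Q" by (rule polytope_imp_compact[OF assms(1)])
  have cvQ: "convex Q" by (rule polytope_imp_convex[OF assms(1)])
  have ne: "Q \<noteq> {}" using x by blast
  have Pnn: "0 \<le> P y" if "y \<in> Q" for y
    using bern_nonneg[OF assms(3)] assms(2) that by blast
  have eps0: "0 \<le> \<epsilon>" using Pnn[OF x] assms(5) x by fastforce
  obtain D where D: "(P has_derivative D) (at x)"
    using P_diff[OF assms(4), of x] unfolding differentiable_def by blast
  have lin: "linear D" using has_derivative_linear[OF D] .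
  have dirb: "\<bar>D v\<bar> \<le> real d ^ 2 * \<epsilon>" if xv: "x + v \<in> Q" for v
  proof -
    obtain p where p: "degree p \<le> d" "\<And>t. P (x + t *\<^sub>R v) = poly p t"
      using line_poly[OF assms(4), of x v] by blast
    have d1: "((\<lambda>t. P (x + t *\<^sub>R v)) has_real_derivative D v) (at 0)" by (rule deriv_line[OF D])
    have "(\<lambda>t. P (x + t *\<^sub>R v)) = poly p" using p(2) by (simp add: fun_eq_iff)
    then have d2: "((\<lambda>t. P (x + t *\<^sub>R v)) has_real_derivative poly (pderiv p) 0) (at 0)"
      by (simp add: poly_DERIV)
    have Dv: "D v = poly (pderiv p) 0" using DERIV_unique[OF d1 d2] .
    have "\<forall>t\<in>{0..1}. \<bar>poly p t - \<epsilon> / 2\<bar> \<le> \<epsilon> / 2"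
    proof
      fix t :: real assume t: "t \<in> {0..1}"
      have "(1 - t) *\<^sub>R x + t *\<^sub>R (x + v) \<in> Q"
        by (rule convexD[OF cvQ x xv]) (use t in auto)
      moreover have "(1 - t) *\<^sub>R x + t *\<^sub>R (x + v) = x + t *\<^sub>R v" by (simp add: algebra_simps)
      ultimately have "x + t *\<^sub>R v \<in> Q" by simp
      then have "0 \<le> P (x + t *\<^sub>R v)" "P (x + t *\<^sub>R v) \<le> \<epsilon>" using Pnn assms(5) by auto
      then have "0 \<le> poly p t" "poly p t \<le> \<epsilon>" unfolding p(2) by auto
      then show "\<bar>poly p t - \<epsilon> / 2\<bar> \<le> \<epsilon> / 2" by (subst abs_le_iff) linarith
    qed
    from markov01[OF p(1) this] show ?thesis unfolding Dv by simp
  qed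
  obtain a b l where ab: "a \<in> Q" "b \<in> Q" "a - b = l *\<^sub>R u" "width_H0 Q \<le> l"
    using chord[OF cQ cvQ ne u] by blast
  have w0: "width_H0 Q > 0" using width_facts(1)[OF cQ ne u] .
  have l0: "l > 0" using ab(4) w0 by simp
  have dU: "deriv (\<lambda>t. P (x + t *\<^sub>R u)) 0 = D u" by (rule DERIV_imp_deriv[OF deriv_line[OF D]])
  have lD: "l * D u = D (a - x) - D (b - x)"
  proof -
    have "D (a - x) - D (b - x) = D ((a - x) - (b - x))" using linear_diff[OF lin] by simp
    also have "(a - x) - (b - x) = l *\<^sub>R u" using ab(3) by simp
    finally show ?thesis using linear_scale[OF lin] by simp
  qed
  have b1: "\<bar>D (a - x)\<bar> \<le> real d ^ 2 * \<epsilon>" using dirb[of "a - x"] ab by auto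
  have b2: "\<bar>D (b - x)\<bar> \<le> real d ^ 2 * \<epsilon>" using dirb[of "b - x"] ab by auto
  have tri: "\<bar>D (a - x) - D (b - x)\<bar> \<le> \<bar>D (a - x)\<bar> + \<bar>D (b - x)\<bar>"
    by (rule abs_triangle_ineq4)
  have "\<bar>l * D u\<bar> \<le> 2 * (real d)^2 * \<epsilon>" unfolding lD using b1 b2 tri by linarith
  then have "l * \<bar>deriv (\<lambda>t. P (x + t *\<^sub>R u)) 0\<bar> \<le> 2 * (real d)^2 * \<epsilon>"
    using l0 unfolding dU by (simp add: abs_mult)
  then have "\<bar>deriv (\<lambda>t. P (x + t *\<^sub>R u)) 0\<bar> \<le> 2 * (real d)^2 * \<epsilon> / l"
    using l0 by (subst le_divide_eq) (simp add: mult.commute)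
  also have "\<dots> \<le> 2 * (real d)^2 * \<epsilon> / width_H0 Q"
  proof (rule divide_left_mono)
    show "0 < l * width_H0 Q" using l0 w0 by simp
  qed (use ab(4) eps0 in auto)
  finally show "\<bar>deriv (\<lambda>t. P (x + t *\<^sub>R u)) 0\<bar> \<le> 2 * (real d)^2 * \<epsilon> / width_H0 Q" .
qed


end
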